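(* Let $G$ be a finite group. Then $U(G)\le K(G)$.
   Context: For $\chi\in\mathrm{Irr}(G)$, the center of $\chi$ is $Z(\chi)=\{g\in G : |\chi(g)|=\chi(1)\}$. For a nonabelian group $G$, let $\mathcal{X}=\{\chi\in\mathrm{Irr}(G) : Z(\chi)>Z(G)\}$ (strict containment) and define $K(G)=\bigcap_{\chi\in\mathcal{X}}\ker(\chi)$; if $G$ is abelian, set $K(G)=G$. For a normal subgroup $H$ of $G$, $\mathrm{Irr}(G\mid H)$ is the set of $\chi\in\mathrm{Irr}(G)$ with $H\not\le\ker(\chi)$, and $V(G\mid H)$ is the subgroup generated by all $g\in G$ with $\chi(g)\ne0$ for some $\chi\in\mathrm{Irr}(G\mid H)$ (with $V(G\mid 1)=1$). For a normal subgroup $N$, $U(G\mid N)$ is the product of all normal subgroups $H$ of $G$ with $V(G\mid H)\le N$, and $U(G)=U(G\mid Z(G))$. *)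

theory Defs
  imports "HOL-Algebra.Algebra" "Jordan_Normal_Form.Matrix"
begin

definition mat_trace :: "complex mat \<Rightarrow> complex" where
  "mat_trace A = (\<Sum>i<dim_row A. A $$ (i, i))"

definition is_rep :: "('g, 'b) monoid_scheme \<Rightarrow> nat \<Rightarrow> ('g \<Rightarrow> complex mat) \<Rightarrow> bool" where
  "is_rep G n \<rho> \<longleftrightarrow>
     (\<forall>g\<in>carrier G. \<rho> g \<in> carrier_mat n n) \<and>
     (\<forall>g\<in>carrier G. \<forall>h\<in>carrier G. \<rho> (g \<otimes>\<^bsub>G\<^esub> h) = \<rho> g * \<rho> h) \<and>
     \<rho> \<one>\<^bsub>G\<^esub> = 1\<^sub>m n"

definition invariant_subspace :: "('g, 'b) monoid_scheme \<Rightarrow> nat \<Rightarrow> ('g \<Rightarrow> complex mat) \<Rightarrow> complex vec set \<Rightarrow> bool" where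
  "invariant_subspace G n \<rho> W \<longleftrightarrow>
     W \<subseteq> carrier_vec n \<and> 0\<^sub>v n \<in> W \<and>
     (\<forall>v\<in>W. \<forall>w\<in>W. v + w \<in> W) \<and>
     (\<forall>c::complex. \<forall>w\<in>W. c \<cdot>\<^sub>v w \<in> W) \<and>
     (\<forall>g\<in>carrier G. \<forall>w\<in>W. \<rho> g *\<^sub>v w \<in> W)"

definition irr_rep :: "('g, 'b) monoid_scheme \<Rightarrow> nat \<Rightarrow> ('g \<Rightarrow> complex mat) \<Rightarrow> bool" where
  "irr_rep G n \<rho> \<longleftrightarrow> is_rep G n \<rho> \<and> n > 0 \<and>
     (\<forall>W. invariant_subspace G n \<rho> W \<longrightarrow> W = {0\<^sub>v n} \<or> W = carrier_vec n)"

definition Irr :: "('g, 'b) monoid_scheme \<Rightarrow> ('g \<Rightarrow> complex) set" where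
  "Irr G = {\<chi>. \<exists>n \<rho>. irr_rep G n \<rho> \<and>
              \<chi> = (\<lambda>g. if g \<in> carrier G then mat_trace (\<rho> g) else 0)}"

definition char_ker :: "('g, 'b) monoid_scheme \<Rightarrow> ('g \<Rightarrow> complex) \<Rightarrow> 'g set" where
  "char_ker G \<chi> = {g \<in> carrier G. \<chi> g = \<chi> \<one>\<^bsub>G\<^esub>}"

definition char_center :: "('g, 'b) monoid_scheme \<Rightarrow> ('g \<Rightarrow> complex) \<Rightarrow> 'g set" where
  "char_center G \<chi> = {g \<in> carrier G. cmod (\<chi> g) = cmod (\<chi> \<one>\<^bsub>G\<^esub>)}"

definition grp_center :: "('g, 'b) monoid_scheme \<Rightarrow> 'g set" where
  "grp_center G = {z \<in> carrier G. \<forall>g\<in>carrier G. z \<otimes>\<^bsub>G\<^esub> g = g \<otimes>\<^bsub>G\<^esub> z}"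

definition Kgrp :: "('g, 'b) monoid_scheme \<Rightarrow> 'g set" where
  "Kgrp G = (if comm_group G then carrier G
             else carrier G \<inter> (\<Inter>\<chi> \<in> {\<chi> \<in> Irr G. grp_center G \<subset> char_center G \<chi>}. char_ker G \<chi>))"

definition Irr_rel :: "('g, 'b) monoid_scheme \<Rightarrow> 'g set \<Rightarrow> ('g \<Rightarrow> complex) set" where
  "Irr_rel G H = {\<chi> \<in> Irr G. \<not> H \<subseteq> char_ker G \<chi>}"

definition Vgrp :: "('g, 'b) monoid_scheme \<Rightarrow> 'g set \<Rightarrow> 'g set" where
  "Vgrp G H = generate G {g \<in> carrier G. \<exists>\<chi> \<in> Irr_rel G H. \<chi> g \<noteq> 0}"

text \<open>Product of all normal subgroups H with V(G|H) \<le> N (= subgroup generated by their union).\<close>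
definition Ugrp_rel :: "('g, 'b) monoid_scheme \<Rightarrow> 'g set \<Rightarrow> 'g set" where
  "Ugrp_rel G N = generate G (\<Union>{H. H \<lhd> G \<and> Vgrp G H \<subseteq> N})"

definition Ugrp :: "('g, 'b) monoid_scheme \<Rightarrow> 'g set" where
  "Ugrp G = Ugrp_rel G (grp_center G)"

end

theory Submission
  imports Defs
begin

lemma rep_carrier: "is_rep G n \<rho> \<Longrightarrow> g \<in> carrier G \<Longrightarrow> \<rho> g \<in> carrier_mat n n"
  unfolding is_rep_def by blast

lemma rep_mult: "is_rep G n \<rho> \<Longrightarrow> g \<in> carrier G \<Longrightarrow> h \<in> carrier G \<Longrightarrow> \<rho> (g \<otimes>\<^bsub>G\<^esub> h) = \<rho> g * \<rho> h"
  unfolding is_rep_def by blast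

lemma rep_one: "is_rep G n \<rho> \<Longrightarrow> \<rho> \<one>\<^bsub>G\<^esub> = 1\<^sub>m n"
  unfolding is_rep_def by blast

lemma trace_one: "mat_trace (1\<^sub>m n) = of_nat n"
  unfolding mat_trace_def by simp

lemma mat_eq_one_if_fix:
  assumes A: "A \<in> carrier_mat n n" and fx: "\<And>v. v \<in> carrier_vec n \<Longrightarrow> A *\<^sub>v v = (v::complex vec)"
  shows "A = 1\<^sub>m n"
proof (rule eq_matI)
  fix i j assume i: "i < dim_row (1\<^sub>m n)" and j: "j < dim_col (1\<^sub>m n)"
  have "(A *\<^sub>v unit_vec n j) $ i = unit_vec n j $ i" using fx[of "unit_vec n j"] by simp
  moreover have "(A *\<^sub>v unit_vec n j) $ i = A $$ (i, j)"
    using A i j by (simp add: scalar_prod_def row_def unit_vec_def if_distrib[of "\<lambda>x. _ * x"] sum.delta' cong: if_cong)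
  ultimately show "A $$ (i, j) = 1\<^sub>m n $$ (i, j)" using i j by simp
qed (use A in auto)

lemma rep_trivial_on_normal:
  assumes grp: "group G" and fin: "finite (carrier G)" and irr: "irr_rep G n \<rho>"
    and N: "H \<lhd> G" and tr: "\<And>h. h \<in> H \<Longrightarrow> mat_trace (\<rho> h) = of_nat n"
    and hH: "h \<in> H"
  shows "\<rho> h = 1\<^sub>m n"
proof -
  interpret group G by (rule grp)
  interpret normal H G by (rule N)
  have rep: "is_rep G n \<rho>" and npos: "n > 0" using irr unfolding irr_rep_def by auto
  have Hc: "H \<subseteq> carrier G" by (rule subset)
  have finH: "finite H" using fin Hc finite_subset by blast
  have carH: "\<And>h. h \<in> H \<Longrightarrow> \<rho> h \<in> carrier_mat n n" using rep_carrier[OF rep] Hc by blast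
  define W where "W = {v \<in> carrier_vec n. \<forall>h\<in>H. \<rho> h *\<^sub>v v = v}"
  have invW: "invariant_subspace G n \<rho> W"
    unfolding invariant_subspace_def
  proof (intro conjI ballI allI)
    show "W \<subseteq> carrier_vec n" unfolding W_def by blast
    show "0\<^sub>v n \<in> W" unfolding W_def
      using carH by (fastforce intro!: eq_vecI simp: scalar_prod_def)
  next
    fix v w assume "v \<in> W" "w \<in> W"
    then show "v + w \<in> W" unfolding W_def using carH
      by (auto simp: mult_add_distrib_mat_vec[OF carH])
  next
    fix c :: complex and w assume "w \<in> W"
    then have wc: "w \<in> carrier_vec n" and wf: "\<And>h. h \<in> H \<Longrightarrow> \<rho> h *\<^sub>v w = w"
      unfolding W_def by auto
    have "\<rho> h *\<^sub>v (c \<cdot>\<^sub>v w) = c \<cdot>\<^sub>v w" if h: "h \<in> H" for h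
      using mult_mat_vec[OF carH[OF h] wc, of c] wf[OF h] by simp
    then show "c \<cdot>\<^sub>v w \<in> W" unfolding W_def using wc by auto
  next
    fix g w assume g: "g \<in> carrier G" and w: "w \<in> W"
    have wc: "w \<in> carrier_vec n" using w unfolding W_def by auto
    have gc: "\<rho> g \<in> carrier_mat n n" using rep_carrier[OF rep g] .
    have "\<rho> h' *\<^sub>v (\<rho> g *\<^sub>v w) = \<rho> g *\<^sub>v w" if h': "h' \<in> H" for h'
    proof -
      define k where "k = inv\<^bsub>G\<^esub> g \<otimes>\<^bsub>G\<^esub> h' \<otimes>\<^bsub>G\<^esub> g"
      have kH: "k \<in> H" unfolding k_def using inv_op_closed1[OF g h'] .
      have h'c: "h' \<in> carrier G" using h' Hc by blast
      have kc: "k \<in> carrier G" using kH Hc by blast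
      have eq: "h' \<otimes>\<^bsub>G\<^esub> g = g \<otimes>\<^bsub>G\<^esub> k" unfolding k_def using g h'c
        by (simp add: m_assoc[symmetric])
      have "\<rho> h' *\<^sub>v (\<rho> g *\<^sub>v w) = (\<rho> h' * \<rho> g) *\<^sub>v w"
        using carH[OF h'] gc wc by simp
      also have "\<dots> = \<rho> (h' \<otimes>\<^bsub>G\<^esub> g) *\<^sub>v w" using rep_mult[OF rep h'c g] by simp
      also have "\<dots> = (\<rho> g * \<rho> k) *\<^sub>v w" using eq rep_mult[OF rep g kc] by simp
      also have "\<dots> = \<rho> g *\<^sub>v (\<rho> k *\<^sub>v w)" using carH[OF kH] gc wc by simp
      also have "\<rho> k *\<^sub>v w = w" using w kH unfolding W_def by auto
      finally show ?thesis .
    qed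
    then show "\<rho> g *\<^sub>v w \<in> W" unfolding W_def using gc wc by auto
  qed
  have WW: "W = {0\<^sub>v n} \<or> W = carrier_vec n" using irr invW unfolding irr_rep_def by blast
  define vj where "vj j = vec n (\<lambda>i. \<Sum>h\<in>H. \<rho> h $$ (i, j))" for j
  have vjW: "vj j \<in> W" if j: "j < n" for j
    unfolding W_def
  proof (intro CollectI conjI ballI)
    show "vj j \<in> carrier_vec n" unfolding vj_def by simp
    fix h' assume h': "h' \<in> H"
    have h'c: "h' \<in> carrier G" using h' Hc by blast
    show "\<rho> h' *\<^sub>v vj j = vj j"
    proof (rule eq_vecI)
      show "dim_vec (\<rho> h' *\<^sub>v vj j) = dim_vec (vj j)" using carH[OF h'] unfolding vj_def by simp
      fix i assume "i < dim_vec (vj j)"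
      then have i: "i < n" unfolding vj_def by simp
      have "(\<rho> h' *\<^sub>v vj j) $ i = (\<Sum>k<n. \<rho> h' $$ (i, k) * (\<Sum>h\<in>H. \<rho> h $$ (k, j)))"
        using carH[OF h'] i unfolding vj_def
        by (simp add: scalar_prod_def row_def lessThan_atLeast0)
      also have "\<dots> = (\<Sum>h\<in>H. \<Sum>k<n. \<rho> h' $$ (i, k) * \<rho> h $$ (k, j))"
        unfolding sum_distrib_left by (rule sum.swap)
      also have "\<dots> = (\<Sum>h\<in>H. (\<rho> h' * \<rho> h) $$ (i, j))"
      proof (rule sum.cong[OF refl])
        fix h assume h: "h \<in> H"
        show "(\<Sum>k<n. \<rho> h' $$ (i, k) * \<rho> h $$ (k, j)) = (\<rho> h' * \<rho> h) $$ (i, j)"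
          using carH[OF h] carH[OF h'] i j
          by (simp add: scalar_prod_def row_def col_def lessThan_atLeast0)
      qed
      also have "\<dots> = (\<Sum>h\<in>H. \<rho> (h' \<otimes>\<^bsub>G\<^esub> h) $$ (i, j))"
        using rep_mult[OF rep h'c] Hc by (intro sum.cong) auto
      also have "\<dots> = (\<Sum>h\<in>(\<lambda>h. h' \<otimes>\<^bsub>G\<^esub> h) ` H. \<rho> h $$ (i, j))"
      proof (rule sum.reindex[symmetric, unfolded comp_def])
        show "inj_on (\<lambda>h. h' \<otimes>\<^bsub>G\<^esub> h) H" using inj_on_subset[OF inj_on_cmult[OF h'c] Hc] .
      qed
      also have "(\<lambda>h. h' \<otimes>\<^bsub>G\<^esub> h) ` H = H"
      proof
        show "(\<lambda>h. h' \<otimes>\<^bsub>G\<^esub> h) ` H \<subseteq> H" using h' by auto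
        show "H \<subseteq> (\<lambda>h. h' \<otimes>\<^bsub>G\<^esub> h) ` H"
        proof
          fix x assume x: "x \<in> H"
          have "x = h' \<otimes>\<^bsub>G\<^esub> (inv\<^bsub>G\<^esub> h' \<otimes>\<^bsub>G\<^esub> x)" using x h'c Hc by (simp add: m_assoc[symmetric])
          moreover have "inv\<^bsub>G\<^esub> h' \<otimes>\<^bsub>G\<^esub> x \<in> H" using x h' by auto
          ultimately show "x \<in> (\<lambda>h. h' \<otimes>\<^bsub>G\<^esub> h) ` H" by blast
        qed
      qed
      finally show "(\<rho> h' *\<^sub>v vj j) $ i = vj j $ i" using i unfolding vj_def by simp
    qed
  qed
  have "(\<Sum>j<n. vj j $ j) = (\<Sum>j<n. \<Sum>h\<in>H. \<rho> h $$ (j, j))" unfolding vj_def by simp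
  also have "\<dots> = (\<Sum>h\<in>H. mat_trace (\<rho> h))"
    unfolding mat_trace_def
  proof -
    have "(\<Sum>j<n. \<Sum>h\<in>H. \<rho> h $$ (j, j)) = (\<Sum>h\<in>H. \<Sum>j<n. \<rho> h $$ (j, j))"
      by (rule sum.swap)
    also have "\<dots> = (\<Sum>h\<in>H. \<Sum>i<dim_row (\<rho> h). \<rho> h $$ (i, i))"
      using carH by (intro sum.cong) auto
    finally show "(\<Sum>j<n. \<Sum>h\<in>H. \<rho> h $$ (j, j)) = (\<Sum>h\<in>H. \<Sum>i<dim_row (\<rho> h). \<rho> h $$ (i, i))" .
  qed
  also have "\<dots> = of_nat (card H) * of_nat n" using tr by simp
  finally have sumeq: "(\<Sum>j<n. vj j $ j) = of_nat (card H) * of_nat n" .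
  have oneH: "\<one>\<^bsub>G\<^esub> \<in> H" using subgroup.one_closed[OF normal_imp_subgroup[OF N]] .
  have "card H > 0" using finH oneH card_gt_0_iff by blast
  then have "(\<Sum>j<n. vj j $ j) \<noteq> 0" using sumeq npos by simp
  then obtain j where j: "j < n" and nz: "vj j $ j \<noteq> 0" by (meson sum.neutral lessThan_iff)
  have "vj j \<noteq> 0\<^sub>v n" using nz j by auto
  then have "W = carrier_vec n" using WW vjW[OF j] by auto
  then show ?thesis using mat_eq_one_if_fix[OF carH[OF hH]] hH unfolding W_def by blast
qed

theorem lemma6p5:
  fixes G :: "('g, 'b) monoid_scheme"
  assumes "group G" and "finite (carrier G)"
  shows "Ugrp G \<subseteq> Kgrp G"
proof -
  interpret group G by (rule assms(1))
  define F where "F = {H. H \<lhd> G \<and> Vgrp G H \<subseteq> grp_center G}"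
  have Fc: "\<Union>F \<subseteq> carrier G" unfolding F_def using normal_imp_subgroup subgroup.subset by blast
  have Uc: "Ugrp G \<subseteq> carrier G"
    unfolding Ugrp_def Ugrp_rel_def F_def[symmetric] using generate_incl[OF Fc] .
  have key: "Ugrp G \<subseteq> char_ker G \<chi>"
    if chi: "\<chi> \<in> Irr G" and ZZ: "grp_center G \<subset> char_center G \<chi>" for \<chi>
  proof -
    obtain n \<rho> where irr: "irr_rep G n \<rho>" and chid: "\<chi> = (\<lambda>g. if g \<in> carrier G then mat_trace (\<rho> g) else 0)"
      using chi unfolding Irr_def by blast
    have rep: "is_rep G n \<rho>" and npos: "n > 0" using irr unfolding irr_rep_def by auto
    have chi1: "\<chi> \<one>\<^bsub>G\<^esub> = of_nat n" using rep_one[OF rep] by (simp add: chid trace_one)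
    define K where "K = {g \<in> carrier G. \<rho> g = 1\<^sub>m n}"
    have Ksub: "subgroup K G"
    proof
      show "K \<subseteq> carrier G" unfolding K_def by blast
      show "\<one>\<^bsub>G\<^esub> \<in> K" unfolding K_def using rep_one[OF rep] by simp
      fix x y assume x: "x \<in> K" and y: "y \<in> K"
      then show "x \<otimes>\<^bsub>G\<^esub> y \<in> K" unfolding K_def using rep_mult[OF rep] by auto
      have xc: "x \<in> carrier G" using x unfolding K_def by blast
      have "\<rho> (inv\<^bsub>G\<^esub> x) * \<rho> x = 1\<^sub>m n" using rep_mult[OF rep, of "inv\<^bsub>G\<^esub> x" x] xc rep_one[OF rep] by simp
      moreover have "\<rho> (inv\<^bsub>G\<^esub> x) * \<rho> x = \<rho> (inv\<^bsub>G\<^esub> x)" using x rep_carrier[OF rep, of "inv\<^bsub>G\<^esub> x"] xc unfolding K_def by simp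
      ultimately show "inv\<^bsub>G\<^esub> x \<in> K" unfolding K_def using xc by simp
    qed
    have HK: "H \<subseteq> K" if HF: "H \<in> F" for H
    proof -
      have N: "H \<lhd> G" and V: "Vgrp G H \<subseteq> grp_center G" using HF unfolding F_def by auto
      have Hc: "H \<subseteq> carrier G" using N normal_imp_subgroup subgroup.subset by blast
      have Hker: "H \<subseteq> char_ker G \<chi>"
      proof (rule ccontr)
        assume "\<not> H \<subseteq> char_ker G \<chi>"
        then have rel: "\<chi> \<in> Irr_rel G H" using chi unfolding Irr_rel_def by blast
        have "char_center G \<chi> \<subseteq> grp_center G"
        proof
          fix g assume g: "g \<in> char_center G \<chi>"
          then have gc: "g \<in> carrier G" and "cmod (\<chi> g) = cmod (\<chi> \<one>\<^bsub>G\<^esub>)" unfolding char_center_def by auto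
          then have "\<chi> g \<noteq> 0" using chi1 npos by auto
          then have "g \<in> Vgrp G H" unfolding Vgrp_def using gc rel by (blast intro: generate.incl)
          then show "g \<in> grp_center G" using V by blast
        qed
        then show False using ZZ by blast
      qed
      have "\<rho> h = 1\<^sub>m n" if h: "h \<in> H" for h
      proof (rule rep_trivial_on_normal[OF assms irr N _ h])
        fix h' assume h': "h' \<in> H"
        then have "\<chi> h' = \<chi> \<one>\<^bsub>G\<^esub>" using Hker unfolding char_ker_def by blast
        then show "mat_trace (\<rho> h') = of_nat n" using chi1 h' Hc by (auto simp add: chid)
      qed
      then show ?thesis unfolding K_def using Hc by blast
    qed
    have "Ugrp G \<subseteq> K"
      unfolding Ugrp_def Ugrp_rel_def F_def[symmetric]
      by (rule generate_subgroup_incl[OF _ Ksub]) (use HK in blast)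
    moreover have "K \<subseteq> char_ker G \<chi>"
      unfolding K_def char_ker_def using chi1 by (auto simp: chid trace_one)
    ultimately show ?thesis by blast
  qed
  show ?thesis unfolding Kgrp_def using Uc key by auto
qed

end
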